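(* Let $\Omega_n=\dfrac{\pi^{n/2}}{\Gamma\left(\frac n2+1\right)}$ for $n\in\mathbb{N}_0$, and for $j\in\mathbb{N}$ let \[ \lambda_j=(-1)^j\left\{2B_{j+1}(1)-B_{j+1}\left(\tfrac12\right)-B_{j+1}\left(\tfrac32\right)\right\}\frac{2^j}{j(j+1)}, \] where $B_m(x)$ are the Bernoulli polynomials. Let $t_0=\frac12$ and let $t_1,t_2,\dots$ be the solution of the infinite system \[ \sum_{j=1}^m(-1)^{j+1}\frac{t_{m-j}}{j}=\lambda_m\qquad(m\in\mathbb{N}). \] Then, as $n\to\infty$, the following asymptotic formula holds: \[ \frac{\Omega_n^2}{\Omega_{n-1}\Omega_{n+1}}\sim\left(1+\frac1n\right)^{\sum_{j=0}^\infty\frac{t_j}{n^j}}. \]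
   Context: $\Omega_n$ is the volume of the unit ball in $\mathbb{R}^n$; $\Gamma$ is Euler's gamma function. The Bernoulli polynomials are defined by $\frac{te^{xt}}{e^t-1}=\sum_{m\ge0}B_m(x)\frac{t^m}{m!}$. The formula is understood as an asymptotic expansion: for every $N$, $\ln\frac{\Omega_n^2}{\Omega_{n-1}\Omega_{n+1}}-\ln\left(1+\frac1n\right)\sum_{j=0}^{N}t_jn^{-j}=O(n^{-N-2})$ as $n\to\infty$. *)

theory Defs
  imports "HOL-Analysis.Analysis" "HOL-Computational_Algebra.Formal_Power_Series"
    "HOL-Library.Landau_Symbols"
begin

text \<open>Bernoulli polynomials via their exponential generating function
  t e^{xt} / (e^t - 1) = sum_m B_m(x) t^m / m!, read as a formal power series in t.\<close>
definition bernoulli_poly :: "nat \<Rightarrow> real \<Rightarrow> real" where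
  "bernoulli_poly m x =
     fact m * fps_nth (fps_X * fps_exp x / (fps_exp 1 - 1)) m"

text \<open>Volume of the unit ball in R^n.\<close>
definition Omega :: "nat \<Rightarrow> real" where
  "Omega n = pi powr (real n / 2) / Gamma (real n / 2 + 1)"

definition lambda_coeff :: "nat \<Rightarrow> real" where
  "lambda_coeff j = (-1) ^ j *
     (2 * bernoulli_poly (j + 1) 1 - bernoulli_poly (j + 1) (1/2)
        - bernoulli_poly (j + 1) (3/2)) * 2 ^ j / (real j * (real j + 1))"

end

theory Submission
  imports Defs
begin
lemma inv_pow_bigo:
  assumes "a \<le> b"
  shows "(\<lambda>n::nat. 1 / real n ^ b) \<in> O(\<lambda>n. 1 / real n ^ a)"
proof (rule bigoI[where c=1])
  show "\<forall>\<^sub>F n in sequentially. norm (1 / real n ^ b) \<le> 1 * norm (1 / real n ^ a)"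
  proof (rule eventually_sequentiallyI[of 1])
    fix n :: nat assume "1 \<le> n"
    hence "real n ^ a \<le> real n ^ b" using assms by (intro power_increasing) auto
    moreover have "0 < real n ^ a" using \<open>1 \<le> n\<close> by simp
    ultimately show "norm (1 / real n ^ b) \<le> 1 * norm (1 / real n ^ a)"
      by (simp add: frac_le)
  qed
qed

lemma bigo_ev_cong:
  assumes "f \<in> O[F](h)" "eventually (\<lambda>x. f x = g x) F"
  shows "g \<in> O[F](h)"
  using assms landau_o.big.in_cong by blast

lemma ps_expansion:
  fixes a :: "nat \<Rightarrow> real" and F :: "real \<Rightarrow> real"
  assumes r: "r > 0" and sms: "\<And>x. \<bar>x\<bar> \<le> r \<Longrightarrow> (\<lambda>i. a i * x ^ i) sums F x"
    and bnd: "\<And>i. \<bar>a i\<bar> \<le> C * R ^ i" and R: "R > 0"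
  shows "(\<lambda>n::nat. F (1 / real n) - (\<Sum>i\<le>L. a i / real n ^ i)) \<in> O(\<lambda>n. 1 / real n ^ Suc L)"
proof (rule bigoI[where c="2 * C * R ^ Suc L"])
  define N0 where "N0 = nat \<lceil>max (1/r) (2*R)\<rceil> + 1"
  have N0: "N0 \<ge> 1" "real N0 \<ge> 1 / r" "real N0 \<ge> 2 * R"
    unfolding N0_def by linarith+
  show "\<forall>\<^sub>F n in sequentially. norm (F (1 / real n) - (\<Sum>i\<le>L. a i / real n ^ i))
          \<le> 2 * C * R ^ Suc L * norm (1 / real n ^ Suc L)"
  proof (rule eventually_sequentiallyI[of N0])
    fix n assume n: "N0 \<le> n"
    define x where "x = 1 / real n"
    have npos: "real n > 0" using n N0 by simp
    have xpos: "x > 0" using npos by (simp add: x_def)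
    have "1 / r \<le> real n" using n N0 by linarith
    hence xr: "\<bar>x\<bar> \<le> r" using r npos
      by (simp add: x_def field_simps)
    have "2 * R \<le> real n" using n N0 by linarith
    hence Rx: "R * x \<le> 1/2" using npos
      by (simp add: x_def field_simps)
    have s: "(\<lambda>i. a i * x ^ i) sums F x" using sms xr .
    hence s2: "(\<lambda>i. a (i + Suc L) * x ^ (i + Suc L)) sums (F x - (\<Sum>i<Suc L. a i * x ^ i))"
      using sums_iff_shift[of "\<lambda>i. a i * x ^ i" "Suc L"] by simp
    have geo: "(\<lambda>i. C * (R * x) ^ Suc L * (R * x) ^ i) sums (C * (R * x) ^ Suc L * (1 / (1 - R * x)))"
      using Rx R xpos by (intro sums_mult geometric_sums) (auto simp: abs_mult)
    have le: "\<bar>a (i + Suc L) * x ^ (i + Suc L)\<bar> \<le> C * (R * x) ^ Suc L * (R * x) ^ i" for i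
    proof -
      have "\<bar>a (i + Suc L) * x ^ (i + Suc L)\<bar> = \<bar>a (i + Suc L)\<bar> * x ^ (i + Suc L)"
        using xpos by (simp add: abs_mult)
      also have "\<dots> \<le> C * R ^ (i + Suc L) * x ^ (i + Suc L)"
        using bnd[of "i + Suc L"] xpos by (intro mult_right_mono) auto
      also have "\<dots> = C * (R * x) ^ Suc L * (R * x) ^ i"
        by (simp add: power_mult_distrib power_add mult_ac)
      finally show ?thesis .
    qed
    have "\<bar>F x - (\<Sum>i<Suc L. a i * x ^ i)\<bar> \<le> C * (R * x) ^ Suc L * (1 / (1 - R * x))"
    proof -
      have "\<bar>F x - (\<Sum>i<Suc L. a i * x ^ i)\<bar> = \<bar>\<Sum>i. a (i + Suc L) * x ^ (i + Suc L)\<bar>"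
        using s2 by (simp add: sums_iff)
      also have "\<dots> \<le> (\<Sum>i. \<bar>a (i + Suc L) * x ^ (i + Suc L)\<bar>)"
      proof (rule summable_rabs)
        show "summable (\<lambda>i. \<bar>a (i + Suc L) * x ^ (i + Suc L)\<bar>)"
          by (rule summable_comparison_test[OF _ sums_summable[OF geo]]) (use le in auto)
      qed
      also have "\<dots> \<le> (\<Sum>i. C * (R * x) ^ Suc L * (R * x) ^ i)"
      proof (rule suminf_le)
        show "summable (\<lambda>i. \<bar>a (i + Suc L) * x ^ (i + Suc L)\<bar>)"
          by (rule summable_comparison_test[OF _ sums_summable[OF geo]]) (use le in auto)
      qed (use le sums_summable[OF geo] in auto)
      also have "\<dots> = C * (R * x) ^ Suc L * (1 / (1 - R * x))" using geo by (simp add: sums_iff)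
      finally show ?thesis .
    qed
    also have "\<dots> \<le> 2 * C * R ^ Suc L * x ^ Suc L"
    proof -
      have "1 / (1 - R * x) \<le> 2" using Rx by (simp add: field_simps)
      moreover have "C \<ge> 0" using bnd[of 0] by simp
      moreover have "C * (R * x) ^ Suc L \<ge> 0" using \<open>C \<ge> 0\<close> R xpos by simp
      ultimately have "C * (R * x) ^ Suc L * (1 / (1 - R * x)) \<le> C * (R * x) ^ Suc L * 2"
        by (intro mult_left_mono)
      thus ?thesis by (simp add: power_mult_distrib mult_ac)
    qed
    finally have "\<bar>F x - (\<Sum>i<Suc L. a i * x ^ i)\<bar> \<le> 2 * C * R ^ Suc L * x ^ Suc L" .
    moreover have "(\<Sum>i<Suc L. a i * x ^ i) = (\<Sum>i\<le>L. a i / real n ^ i)"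
      by (simp add: x_def lessThan_Suc_atMost power_one_over divide_inverse power_inverse)
    ultimately show "norm (F (1 / real n) - (\<Sum>i\<le>L. a i / real n ^ i))
          \<le> 2 * C * R ^ Suc L * norm (1 / real n ^ Suc L)"
      using xpos by (simp add: x_def power_one_over)
  qed
qed

definition lc :: "real \<Rightarrow> nat \<Rightarrow> real" where
  "lc c i = - ((- c) ^ i) / real i"

lemma ln_expansion:
  assumes c: "c > 0"
  shows "(\<lambda>n::nat. ln (1 + c / real n) - (\<Sum>i\<le>L. lc c i / real n ^ i)) \<in> O(\<lambda>n. 1 / real n ^ Suc L)"
proof -
  have "(\<lambda>n::nat. ln (1 + c * (1 / real n)) - (\<Sum>i\<le>L. lc c i / real n ^ i)) \<in> O(\<lambda>n. 1 / real n ^ Suc L)"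
  proof (rule ps_expansion[where r="1/(2*c)" and C=1 and R=c and F="\<lambda>x. ln (1 + c * x)" and a="lc c"])
    show "0 < 1 / (2 * c)" using c by simp
    show "0 < c" by fact
    fix x :: real assume x: "\<bar>x\<bar> \<le> 1 / (2 * c)"
    have "\<bar>c * x\<bar> = c * \<bar>x\<bar>" using c by (simp add: abs_mult)
    also have "\<dots> \<le> c * (1 / (2 * c))" using x c by (intro mult_left_mono) auto
    also have "\<dots> < 1" using c by simp
    finally have cx: "\<bar>c * x\<bar> < 1" .
    have eq: "(\<lambda>i. lc c i * x ^ i) = (\<lambda>n. - ((- (c * x)) ^ n) / of_nat n)"
    proof
      fix i
      have "- (c * x) = (- c) * x" by simp
      hence "(- (c * x)) ^ i = (- c) ^ i * x ^ i" by (simp only: power_mult_distrib)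
      thus "lc c i * x ^ i = - ((- (c * x)) ^ i) / of_nat i" unfolding lc_def by simp
    qed
    from ln_series'[OF cx] show "(\<lambda>i. lc c i * x ^ i) sums ln (1 + c * x)"
      by (simp only: eq)
  next
    fix i :: nat
    show "\<bar>lc c i\<bar> \<le> 1 * c ^ i"
    proof (cases "i = 0")
      case False
      hence "\<bar>lc c i\<bar> = c ^ i / real i" using c by (simp add: lc_def abs_mult power_abs)
      also have "\<dots> \<le> c ^ i" using False c by (simp add: divide_le_eq)
      finally show ?thesis by simp
    qed (simp add: lc_def)
  qed
  thus ?thesis by simp
qed

definition gk :: "nat \<Rightarrow> nat \<Rightarrow> real" where
  "gk k j = (if k \<le> j then (- real k gchoose (j - k)) * 2 ^ (j - k) else 0)"

lemma binom_expansion: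
  assumes k: "k \<ge> 1"
  shows "(\<lambda>n::nat. (1 + 2 * (1 / real n)) powr (- real k) - (\<Sum>i\<le>L. (- real k gchoose i) * 2 ^ i / real n ^ i))
      \<in> O(\<lambda>n. 1 / real n ^ Suc L)"
proof (rule ps_expansion[where r="1/4" and C="2 ^ k" and R=4 and F="\<lambda>x. (1 + 2 * x) powr (- real k)" and a="\<lambda>i. (- real k gchoose i) * 2 ^ i"])
  fix x :: real assume x: "\<bar>x\<bar> \<le> 1/4"
  have "\<bar>2 * x\<bar> < 1" using x by (simp add: abs_mult)
  from gen_binomial_real[OF this, of "- real k"]
  show "(\<lambda>i. (- real k gchoose i) * 2 ^ i * x ^ i) sums (1 + 2 * x) powr (- real k)"
    by (simp add: power_mult_distrib mult_ac)
next
  fix i :: nat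
  have "\<bar>(- real k gchoose i)\<bar> = \<bar>real k + real i - 1 gchoose i\<bar>"
    by (simp add: gbinomial_minus abs_mult)
  also have "real k + real i - 1 = real (k + i - 1)" using k by simp
  also have "(real (k + i - 1) gchoose i) = real ((k + i - 1) choose i)"
    by (simp add: binomial_gbinomial)
  also have "\<bar>real ((k + i - 1) choose i)\<bar> \<le> 2 ^ (k + i - 1)"
  proof -
    have "real ((k + i - 1) choose i) \<le> real ((2::nat) ^ (k + i - 1))"
      using binomial_le_pow2[of "k+i-1" i] by (simp only: of_nat_le_iff)
    thus ?thesis by simp
  qed
  also have "(2::real) ^ (k + i - 1) \<le> 2 ^ (k + i)" by (intro power_increasing) auto
  finally have "\<bar>(- real k gchoose i)\<bar> \<le> 2 ^ k * 2 ^ i" by (simp add: power_add)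
  hence "\<bar>(- real k gchoose i)\<bar> * 2 ^ i \<le> 2 ^ k * 2 ^ i * 2 ^ i" by simp
  also have "(2::real) ^ k * 2 ^ i * 2 ^ i = 2 ^ k * 4 ^ i" by (simp add: power_mult_distrib[symmetric])
  finally show "\<bar>(- real k gchoose i) * 2 ^ i\<bar> \<le> 2 ^ k * 4 ^ i"
    by (simp add: abs_mult)
qed auto

lemma shift_expansion:
  assumes k: "k \<ge> 1" "k \<le> M"
  shows "(\<lambda>n::nat. 1 / real (n + 2) ^ k - (\<Sum>j=1..M. gk k j / real n ^ j)) \<in> O(\<lambda>n. 1 / real n ^ Suc M)"
proof -
  define L where "L = M - k"
  have HML: "M = L + k" using k by (simp add: L_def)
  have "(\<lambda>n::nat. (1 / real n ^ k) * ((1 + 2 * (1 / real n)) powr (- real k) - (\<Sum>i\<le>L. (- real k gchoose i) * 2 ^ i / real n ^ i)))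
      \<in> O(\<lambda>n. (1 / real n ^ k) * (1 / real n ^ Suc L))"
    by (intro landau_o.big.mult_left binom_expansion k)
  also have "(\<lambda>n. (1 / real n ^ k) * (1 / real n ^ Suc L)) = (\<lambda>n::nat. 1 / real n ^ Suc M)"
    by (simp add: HML power_add mult_ac)
  finally have *: "(\<lambda>n::nat. (1 / real n ^ k) * ((1 + 2 * (1 / real n)) powr (- real k) - (\<Sum>i\<le>L. (- real k gchoose i) * 2 ^ i / real n ^ i)))
      \<in> O(\<lambda>n. 1 / real n ^ Suc M)" .
  show ?thesis
  proof (rule bigo_ev_cong[OF *])
    show "\<forall>\<^sub>F n in sequentially. (1 / real n ^ k) * ((1 + 2 * (1 / real n)) powr (- real k) - (\<Sum>i\<le>L. (- real k gchoose i) * 2 ^ i / real n ^ i))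
        = 1 / real (n + 2) ^ k - (\<Sum>j=1..M. gk k j / real n ^ j)"
    proof (rule eventually_sequentiallyI[of 1])
      fix n :: nat assume n: "n \<ge> 1"
      hence np: "real n > 0" by simp
      have b: "1 + 2 * (1 / real n) = (real n + 2) / real n" using np by (simp add: field_simps)
      have pos: "(real n + 2) / real n > 0" using np by simp
      have "(1 + 2 * (1 / real n)) powr (- real k) = 1 / ((real n + 2) / real n) ^ k"
        by (simp only: b powr_minus powr_realpow[OF pos] inverse_eq_divide)
      hence e1: "(1 / real n ^ k) * (1 + 2 * (1 / real n)) powr (- real k) = 1 / real (n + 2) ^ k"
        using np by (simp add: power_divide add.commute)
      have "(1 / real n ^ k) * (\<Sum>i\<le>L. (- real k gchoose i) * 2 ^ i / real n ^ i)
          = (\<Sum>i\<le>L. gk k (i + k) / real n ^ (i + k))"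
        by (simp add: sum_distrib_left gk_def power_add mult_ac)
      also have "\<dots> = (\<Sum>j\<in>(\<lambda>i. i + k) ` {..L}. gk k j / real n ^ j)"
        by (subst sum.reindex) (auto simp: inj_on_def)
      also have "(\<lambda>i. i + k) ` {..L} = {k..M}"
      proof
        show "(\<lambda>i. i + k) ` {..L} \<subseteq> {k..M}" using HML by auto
        show "{k..M} \<subseteq> (\<lambda>i. i + k) ` {..L}"
        proof
          fix j assume j: "j \<in> {k..M}"
          show "j \<in> (\<lambda>i. i + k) ` {..L}"
            by (rule image_eqI[of _ _ "j - k"]) (use j HML in auto)
        qed
      qed
      also have "(\<Sum>j\<in>{k..M}. gk k j / real n ^ j) = (\<Sum>j=1..M. gk k j / real n ^ j)"
        using k by (intro sum.mono_neutral_left) (auto simp: gk_def)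
      finally show "(1 / real n ^ k) * ((1 + 2 * (1 / real n)) powr (- real k) - (\<Sum>i\<le>L. (- real k gchoose i) * 2 ^ i / real n ^ i))
        = 1 / real (n + 2) ^ k - (\<Sum>j=1..M. gk k j / real n ^ j)"
        using e1 by (simp add: right_diff_distrib)
    qed
  qed
qed

definition lG :: "real \<Rightarrow> real" where "lG z = ln (Gamma z)"

lemma lG_plus1: "z > 0 \<Longrightarrow> lG (z + 1) = ln z + lG z"
proof -
  assume z: "z > 0"
  hence "z \<notin> \<int>\<^sub>\<le>\<^sub>0" by (auto elim!: nonpos_Ints_cases)
  hence "Gamma (z + 1) = z * Gamma z" by (rule Gamma_plus1)
  moreover have "ln (z * Gamma z) = ln z + ln (Gamma z)"
  proof -
    have "Gamma z \<noteq> 0" using Gamma_real_pos[OF z] by linarith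
    moreover have "z \<noteq> 0" using z by simp
    ultimately show ?thesis by (simp add: ln_mult)
  qed
  ultimately show ?thesis by (simp add: lG_def)
qed

definition FG :: "nat \<Rightarrow> real" where
  "FG n = lG (real n / 2 + 1/2) + lG (real n / 2 + 3/2) - 2 * lG (real n / 2 + 1)"

lemma fexpr_eq:
  assumes n: "n \<ge> 1"
  shows "ln (Omega n ^ 2 / (Omega (n - 1) * Omega (n + 1))) = FG n"
proof -
  have r1: "real (n - 1) = real n - 1" using n by simp
  define a where "a = Gamma (real n / 2 + 1/2)"
  define b where "b = Gamma (real n / 2 + 3/2)"
  define c where "c = Gamma (real n / 2 + 1)"
  have pos: "a > 0" "b > 0" "c > 0" unfolding a_def b_def c_def by auto
  have o1: "Omega (n - 1) = pi powr ((real n - 1) / 2) / a"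
    unfolding Omega_def a_def r1 by (simp add: field_simps)
  have o2: "Omega (n + 1) = pi powr ((real n + 1) / 2) / b"
    unfolding Omega_def b_def by (simp add: field_simps)
  have o0: "Omega n = pi powr (real n / 2) / c"
    unfolding Omega_def c_def by simp
  have pp: "pi powr ((real n - 1) / 2) * pi powr ((real n + 1) / 2) = (pi powr (real n / 2))^2"
  proof -
    have s: "(real n - 1) / 2 + (real n + 1) / 2 = real n / 2 + real n / 2" by (simp add: field_simps)
    show ?thesis by (simp only: powr_add[symmetric] s power2_eq_square)
  qed
  have "Omega n ^ 2 / (Omega (n - 1) * Omega (n + 1)) = a * b / c^2"
    unfolding o0 o1 o2 using pos pp by (simp add: field_simps power2_eq_square)
  hence "ln (Omega n ^ 2 / (Omega (n - 1) * Omega (n + 1))) = ln a + ln b - 2 * ln c"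
    using pos by (simp add: ln_mult ln_div ln_realpow)
  thus ?thesis by (simp add: FG_def lG_def a_def b_def c_def)
qed

lemma FG_step: "FG (n + 2) - FG n = ln (real n + 1) + ln (real n + 3) - 2 * ln (real n + 2)"
proof -
  have e1: "real (n + 2) / 2 + 1/2 = (real n / 2 + 1/2) + 1" by (simp add: field_simps)
  have e2: "real (n + 2) / 2 + 3/2 = (real n / 2 + 3/2) + 1" by (simp add: field_simps)
  have e3: "real (n + 2) / 2 + 1 = (real n / 2 + 1) + 1" by (simp add: field_simps)
  have "FG (n + 2) - FG n = ln (real n / 2 + 1/2) + ln (real n / 2 + 3/2) - 2 * ln (real n / 2 + 1)"
    unfolding FG_def e1 e2 e3 by (subst (1 2 3) lG_plus1) auto
  also have "\<dots> = ln ((real n + 1) / 2) + ln ((real n + 3) / 2) - 2 * ln ((real n + 2) / 2)"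
    by (simp add: field_simps)
  also have "\<dots> = ln (real n + 1) + ln (real n + 3) - 2 * ln (real n + 2)"
    by (simp add: ln_div)
  finally show ?thesis .
qed

lemma FG_bounds:
  assumes n: "n \<ge> 1"
  shows "0 \<le> FG n" "FG n \<le> (ln (real n / 2 + 1) - ln (real n / 2)) / 2"
proof -
  define w where "w = real n / 2 + 1"
  have w: "w \<ge> 3/2" using n by (simp add: w_def)
  have "lG = ln \<circ> Gamma" by (simp add: fun_eq_iff lG_def)
  hence cv: "convex_on {0<..} lG" using log_convex_Gamma_real by simp
  have mid: "lG ((x + y) / 2) \<le> (lG x + lG y) / 2" if "x > 0" "y > 0" for x y
    using convex_onD[OF cv, of "1/2" x y] that by (simp add: field_simps)
  have m1: "lG (w + 1/2) \<le> (lG w + lG (w + 1)) / 2"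
  proof -
    have eq: "(w + (w + 1)) / 2 = w + 1/2" by simp
    have "lG ((w + (w + 1)) / 2) \<le> (lG (w) + lG (w + 1)) / 2" by (rule mid) (use w in auto)
    then show ?thesis by (simp only: eq)
  qed
  have m2: "lG (w - 1/2) \<le> (lG (w - 1) + lG w) / 2"
  proof -
    have eq: "(w - 1 + (w)) / 2 = w - 1/2" by simp
    have "lG ((w - 1 + (w)) / 2) \<le> (lG (w - 1) + lG (w)) / 2" by (rule mid) (use w in auto)
    then show ?thesis by (simp only: eq)
  qed
  have m3: "lG w \<le> (lG (w - 1/2) + lG (w + 1/2)) / 2"
  proof -
    have eq: "(w - 1/2 + (w + 1/2)) / 2 = w" by simp
    have "lG ((w - 1/2 + (w + 1/2)) / 2) \<le> (lG (w - 1/2) + lG (w + 1/2)) / 2" by (rule mid) (use w in auto)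
    then show ?thesis by (simp only: eq)
  qed
  have p1: "lG (w + 1) = ln w + lG w" using lG_plus1[of w] w by simp
  have p2: "lG w = ln (w - 1) + lG (w - 1)" using lG_plus1[of "w - 1"] w by simp
  have a1: "real n / 2 + 1/2 = w - 1/2" "real n / 2 + 3/2 = w + 1/2" "real n / 2 + 1 = w"
    by (simp_all add: w_def)
  have F: "FG n = lG (w - 1/2) + lG (w + 1/2) - 2 * lG w"
    unfolding FG_def by (simp only: a1)
  show "0 \<le> FG n" using F m3 by simp
  have "FG n \<le> (ln w - ln (w - 1)) / 2" using F m1 m2 p1 p2 by simp
  thus "FG n \<le> (ln (real n / 2 + 1) - ln (real n / 2)) / 2" by (simp add: w_def)
qed

lemma FG_le:
  assumes n: "n \<ge> 1"
  shows "FG n \<le> 1 / real n"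
proof -
  have np: "real n > 0" using n by simp
  have "ln (real n / 2 + 1) - ln (real n / 2) = ln ((real n / 2 + 1) / (real n / 2))"
    by (rule ln_divide_pos[symmetric]) (use np in auto)
  also have "\<dots> \<le> (real n / 2 + 1) / (real n / 2) - 1"
    using np by (intro ln_le_minus_one) simp
  also have "\<dots> = 2 / real n" using np by (simp add: field_simps)
  finally show ?thesis using FG_bounds(2)[OF n] by simp
qed

lemma FG_tendsto: "FG \<longlonglongrightarrow> 0"
proof (rule tendsto_sandwich[of "\<lambda>_. 0" _ _ "\<lambda>n. 1 / real n"])
  show "\<forall>\<^sub>F n in sequentially. 0 \<le> FG n"
    using FG_bounds(1) by (intro eventually_sequentiallyI[of 1])
  show "\<forall>\<^sub>F n in sequentially. FG n \<le> 1 / real n"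
    using FG_le by (intro eventually_sequentiallyI[of 1])
  show "(\<lambda>n. 1 / real n) \<longlonglongrightarrow> 0" using lim_inverse_n' by simp
qed simp

lemma telesc_frac: "(p::real) \<ge> 1 \<Longrightarrow> 1 / (2 * p) - 1 / (2 * (p + 2)) = 1 / (p * (p + 2))"
proof -
  assume p: "p \<ge> 1"
  have nz: "p \<noteq> 0" "p + 2 \<noteq> 0" "p * (p + 2) \<noteq> 0" "2 * p \<noteq> 0" "2 * (p + 2) \<noteq> 0" using p by auto
  have "1 / (2 * p) - 1 / (2 * (p + 2)) = (1 * (2 * (p + 2)) - 1 * (2 * p)) / ((2 * p) * (2 * (p + 2)))"
    using nz(4,5) by (rule diff_frac_eq)
  also have "\<dots> = 4 / (4 * (p * (p + 2)))" by (simp add: algebra_simps)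
  also have "\<dots> = 1 / (p * (p + 2))" by simp
  finally show ?thesis .
qed

lemma inv_sq_le: "(m::real) \<ge> 2 \<Longrightarrow> 1 / m^2 \<le> 1 / (2 * (m - 1)) - 1 / (2 * (m + 1))"
proof -
  assume m: "m \<ge> 2"
  define p where "p = m - 1"
  have p: "p \<ge> 1" using m by (simp add: p_def)
  have mp: "m - 1 = p" "m + 1 = p + 2" "m = p + 1" by (simp_all add: p_def)
  have "1 / (p + 1)^2 \<le> 1 / (p * (p + 2))"
  proof (rule divide_left_mono)
    show "p * (p + 2) \<le> (p + 1)^2" by (simp add: power2_eq_square algebra_simps)
    show "0 < (p + 1)^2 * (p * (p + 2))" using p by (intro mult_pos_pos) auto
  qed simp
  thus ?thesis using telesc_frac[OF p] unfolding mp by (simp add: add.commute)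
qed

lemma telescope:
  fixes e :: "nat \<Rightarrow> real"
  assumes lim: "e \<longlonglongrightarrow> 0"
    and diff: "(\<lambda>n. e (n + 2) - e n) \<in> O(\<lambda>n. 1 / real n ^ (M + 2))"
  shows "e \<in> O(\<lambda>n. 1 / real n ^ (M + 1))"
proof -
  from diff obtain c where c: "c > 0"
    and ev: "eventually (\<lambda>n. norm (e (n + 2) - e n) \<le> c * norm (1 / real n ^ (M + 2))) sequentially"
    by (elim landau_o.bigE) auto
  from ev obtain N1 where N1: "\<And>n. n \<ge> N1 \<Longrightarrow> \<bar>e (n + 2) - e n\<bar> \<le> c / real n ^ (M + 2)"
    by (auto simp: eventually_sequentially)
  show ?thesis
  proof (rule bigoI[where c=c])
    show "\<forall>\<^sub>F n in sequentially. norm (e n) \<le> c * norm (1 / real n ^ (M + 1))"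
    proof (rule eventually_sequentiallyI[of "max N1 2"])
      fix n assume n: "max N1 2 \<le> n"
      hence n1: "n \<ge> N1" and n2: "n \<ge> 2" by auto
      have np: "real n \<ge> 2" using n2 by simp
      define B where "B = c / real n ^ M"
      have Bnn: "B \<ge> 0" using c np by (simp add: B_def)
      have step: "\<bar>e n - e (n + 2 * K)\<bar> \<le> B * (1 / (2 * (real n - 1)) - 1 / (2 * (real (n + 2 * K) - 1)))" for K
      proof (induction K)
        case 0 thus ?case by simp
      next
        case (Suc K)
        define m where "m = real (n + 2 * K)"
        have m2: "m \<ge> real n" "m \<ge> 2" using np by (auto simp: m_def)
        have "\<bar>e (n + 2 * K + 2) - e (n + 2 * K)\<bar> \<le> c / m ^ (M + 2)"
          using N1[of "n + 2 * K"] n1 by (simp add: m_def)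
        also have "c / m ^ (M + 2) = (c / m ^ M) * (1 / m^2)" by (simp add: power_add power2_eq_square)
        also have "\<dots> \<le> B * (1 / (2 * (m - 1)) - 1 / (2 * (m + 1)))"
        proof (rule mult_mono)
          show "c / m ^ M \<le> B" unfolding B_def using c np m2
            by (intro divide_left_mono power_mono mult_pos_pos) auto
          show "1 / m^2 \<le> 1 / (2 * (m - 1)) - 1 / (2 * (m + 1))" using m2(2) by (rule inv_sq_le)
        qed (use Bnn in auto)
        finally have d: "\<bar>e (n + 2 * K + 2) - e (n + 2 * K)\<bar> \<le> B * (1 / (2 * (m - 1)) - 1 / (2 * (m + 1)))" .
        have "\<bar>e n - e (n + 2 * Suc K)\<bar> \<le> \<bar>e n - e (n + 2 * K)\<bar> + \<bar>e (n + 2 * K + 2) - e (n + 2 * K)\<bar>"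
          by simp
        also have "\<dots> \<le> B * (1 / (2 * (real n - 1)) - 1 / (2 * (m - 1))) + B * (1 / (2 * (m - 1)) - 1 / (2 * (m + 1)))"
          using Suc.IH d by (simp add: m_def)
        also have "\<dots> = B * (1 / (2 * (real n - 1)) - 1 / (2 * (real (n + 2 * Suc K) - 1)))"
          by (simp add: m_def algebra_simps)
        finally show ?case .
      qed
      have bnd: "\<bar>e (n + 2 * K)\<bar> \<ge> \<bar>e n\<bar> - B / (2 * (real n - 1))" for K
      proof -
        have "1 / (2 * (real (n + 2 * K) - 1)) \<ge> 0" using np by simp
        hence "B * (1 / (2 * (real n - 1)) - 1 / (2 * (real (n + 2 * K) - 1))) \<le> B / (2 * (real n - 1))"
          using Bnn by (simp add: algebra_simps mult_left_mono)
        thus ?thesis using step[of K] by linarith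
      qed
      have "(\<lambda>K. \<bar>e (n + 2 * K)\<bar>) \<longlonglongrightarrow> 0"
      proof -
        have "strict_mono (\<lambda>K. n + 2 * K)" by (auto simp: strict_mono_def)
        from LIMSEQ_subseq_LIMSEQ[OF lim this] have "(\<lambda>K. e (n + 2 * K)) \<longlonglongrightarrow> 0"
          by (simp add: o_def)
        thus ?thesis using tendsto_rabs by fastforce
      qed
      hence "\<bar>e n\<bar> - B / (2 * (real n - 1)) \<le> 0"
        using bnd by (intro LIMSEQ_le_const) auto
      hence "\<bar>e n\<bar> \<le> B / (2 * (real n - 1))" by simp
      also have "\<dots> \<le> B / real n" using Bnn np by (intro divide_left_mono) auto
      also have "\<dots> = c * norm (1 / real n ^ (M + 1))" using np by (simp add: B_def)
      finally show "norm (e n) \<le> c * norm (1 / real n ^ (M + 1))" by simp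
    qed
  qed
qed

definition Eb :: "real \<Rightarrow> real fps" where
  "Eb x = fps_X * fps_exp x / (fps_exp 1 - 1)"

lemma bp_Eb: "bernoulli_poly m x = fact m * fps_nth (Eb x) m"
  by (simp add: bernoulli_poly_def Eb_def)

lemma Eb_mult: "Eb x * (fps_exp 1 - 1) = fps_X * fps_exp x"
proof -
  have g1: "fps_nth (fps_exp (1::real) - 1) 1 = 1" by simp
  hence gnz: "fps_exp (1::real) - 1 \<noteq> 0" by auto
  have sg: "subdegree (fps_exp (1::real) - 1) \<le> 1" using g1 by (intro subdegree_leI) simp
  have f1: "fps_nth (fps_X * fps_exp x) 1 = 1" by simp
  hence fnz: "fps_X * fps_exp x \<noteq> 0" by auto
  have sf: "subdegree (fps_X * fps_exp x) \<ge> 1"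
    using fnz by (intro subdegree_geI) auto
  show ?thesis unfolding Eb_def using gnz sg sf by (intro fps_times_divide_eq) auto
qed

definition CF :: "real fps" where
  "CF = 2 * Eb 1 - Eb (1/2) - Eb (3/2)"

definition E1 :: "real fps" where "E1 = fps_exp 1 - 1"

lemma CF_mult: "CF * E1 = fps_X * (2 * fps_exp 1 - fps_exp (1/2) - fps_exp (3/2))"
proof -
  have "CF * E1 = 2 * (Eb 1 * E1) - Eb (1/2) * E1 - Eb (3/2) * E1"
    unfolding CF_def by (simp add: algebra_simps)
  also have "\<dots> = 2 * (fps_X * fps_exp 1) - fps_X * fps_exp (1/2) - fps_X * fps_exp (3/2)"
    unfolding E1_def Eb_mult by simp
  also have "\<dots> = fps_X * (2 * fps_exp 1 - fps_exp (1/2) - fps_exp (3/2))"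
    by (simp add: algebra_simps)
  finally show ?thesis .
qed

lemma CF_nth_eq: "fps_nth CF n = 2 * fps_nth (Eb 1) n - fps_nth (Eb (1/2)) n - fps_nth (Eb (3/2)) n"
  unfolding CF_def mult_2 by simp

lemma CF_nth: "fps_nth (CF * E1) (Suc j) = (2 - (1/2)^j - (3/2)^j) / fact j"
  unfolding CF_mult by (simp add: diff_divide_distrib)

lemma E1_nth: "fps_nth E1 i = (if i = 0 then 0 else 1 / fact i)"
  by (simp add: E1_def)

lemma CF0: "fps_nth CF 0 = 0"
proof -
  have "fps_nth (CF * E1) 1 = fps_nth CF 0" by (simp add: fps_mult_nth E1_nth)
  thus ?thesis using CF_nth[of 0] by simp
qed

lemma CF1: "fps_nth CF 1 = 0"
proof -
  have "fps_nth (CF * E1) 2 = fps_nth CF 0 / 2 + fps_nth CF 1"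
    by (simp add: fps_mult_nth numeral_2_eq_2 E1_nth)
  thus ?thesis using CF_nth[of 1] CF0 by (simp add: numeral_2_eq_2)
qed

lemma lambda_CF: "lambda_coeff k = (-1)^k * (fact (k + 1) * fps_nth CF (k + 1)) * 2^k / (real k * (real k + 1))"
  unfolding lambda_coeff_def CF_nth_eq by (simp add: bp_Eb algebra_simps)

lemma CF_sum:
  assumes j: "j \<ge> 1"
  shows "(\<Sum>k=1..j-1. fps_nth CF (k + 1) / fact (j - k)) = (2 - (1/2)^j - (3/2)^j) / fact j"
proof -
  have "(\<Sum>k=1..j-1. fps_nth CF (k + 1) / fact (j - k)) = (\<Sum>i=2..j. fps_nth CF i * fps_nth E1 (Suc j - i))"
  proof (rule sum.reindex_bij_witness[where i="\<lambda>i. i - 1" and j="\<lambda>k. k + 1"])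
    fix k assume k: "k \<in> {1..j-1}"
    hence "Suc j - (k + 1) = j - k" "j - k \<noteq> 0" by auto
    thus "fps_nth CF (k + 1) * fps_nth E1 (Suc j - (k + 1)) = fps_nth CF (k + 1) / fact (j - k)"
      by (simp add: E1_nth)
  qed auto
  also have "\<dots> = (\<Sum>i=0..Suc j. fps_nth CF i * fps_nth E1 (Suc j - i))"
  proof (rule sum.mono_neutral_left)
    show "\<forall>i\<in>{0..Suc j} - {2..j}. fps_nth CF i * fps_nth E1 (Suc j - i) = 0"
    proof
      fix i assume "i \<in> {0..Suc j} - {2..j}"
      hence "i = 0 \<or> i = 1 \<or> i = Suc j" by auto
      thus "fps_nth CF i * fps_nth E1 (Suc j - i) = 0" using CF0 CF1 by (auto simp: E1_nth)
    qed
  qed auto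
  also have "\<dots> = fps_nth (CF * E1) (Suc j)" by (simp add: fps_mult_nth)
  finally show ?thesis using CF_nth by simp
qed

lemma gk_eq:
  assumes "1 \<le> k" "k \<le> j"
  shows "gk k j = (-1)^(j-k) * (fact (j-1) / (fact (j-k) * fact (k-1))) * 2^(j-k)"
proof -
  have "(- real k gchoose (j - k)) = (-1)^(j-k) * (real k + real (j-k) - 1 gchoose (j-k))"
    by (rule gbinomial_minus)
  also have "real k + real (j-k) - 1 = real (j - 1)" using assms by simp
  also have "(real (j - 1) gchoose (j-k)) = real ((j - 1) choose (j - k))"
    by (simp add: binomial_gbinomial)
  also have "\<dots> = fact (j-1) / (fact (j-k) * fact (j - 1 - (j - k)))"
    using assms by (intro binomial_fact) auto
  also have "j - 1 - (j - k) = k - 1" using assms by simp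
  finally show ?thesis using assms by (simp add: gk_def)
qed

lemma term_eq:
  assumes k: "1 \<le> k" "k \<le> j"
  shows "lambda_coeff k * gk k j = (-1)^j * 2^j * fact (j-1) * (fps_nth CF (k + 1) / fact (j - k))"
proof -
  define A where "A = fps_nth CF (k + 1)"
  define F where "F = (fact (k - 1) :: real)"
  define G where "G = (fact (j - k) :: real)"
  define H where "H = (fact (j - 1) :: real)"
  have nz: "F \<noteq> 0" "G \<noteq> 0" "real k \<noteq> 0" "real k + 1 \<noteq> 0" using k by (auto simp: F_def G_def)
  have fk: "(fact (k + 1) :: real) = real k * (real k + 1) * F"
  proof -
    obtain k' where k': "k = Suc k'" using k by (cases k) auto
    show ?thesis by (simp add: k' F_def algebra_simps)
  qed
  define K where "K = real k * (real k + 1)"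
  have Knz: "K \<noteq> 0" using k by (simp add: K_def)
  have "lambda_coeff k * gk k j = (-1)^k * (K * F * A) * 2^k / K
        * ((-1)^(j-k) * (H / (G * F)) * 2^(j-k))"
    unfolding lambda_CF gk_eq[OF k] fk A_def F_def G_def H_def K_def ..
  also have "\<dots> = ((-1)^k * (-1)^(j-k)) * (2^k * 2^(j-k)) * H * (A / G)"
    using nz Knz by (simp add: field_simps)
  also have "(-1::real)^k * (-1)^(j-k) = (-1)^j" using k by (simp flip: power_add)
  also have "(2::real)^k * 2^(j-k) = 2^j" using k by (simp flip: power_add)
  finally show ?thesis by (simp add: A_def G_def H_def)
qed

lemma star:
  assumes j: "j \<ge> 1"
  shows "(\<Sum>k=1..j-1. lambda_coeff k * gk k j) = lc 1 j + lc 3 j - 2 * lc 2 j"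
proof -
  have "(\<Sum>k=1..j-1. lambda_coeff k * gk k j) = (\<Sum>k=1..j-1. (-1)^j * 2^j * fact (j-1) * (fps_nth CF (k + 1) / fact (j - k)))"
    by (intro sum.cong refl term_eq) auto
  also have "\<dots> = (-1)^j * 2^j * fact (j-1) * (\<Sum>k=1..j-1. fps_nth CF (k + 1) / fact (j - k))"
    by (simp add: sum_distrib_left)
  also have "\<dots> = (-1)^j * 2^j * fact (j-1) * ((2 - (1/2)^j - (3/2)^j) / fact j)"
    using CF_sum[OF j] by simp
  also have "(fact j :: real) = real j * fact (j - 1)"
    using j by (simp add: fact_reduce)
  also have "(-1)^j * 2^j * fact (j-1) * ((2 - (1/2)^j - (3/2)^j) / (real j * fact (j - 1)))
      = (-1)^j * (2 * 2^j - 2^j * (1/2)^j - 2^j * (3/2)^j) / (real j :: real)"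
    using j by (simp add: field_simps)
  also have "(2::real)^j * (1/2)^j = 1" by (simp flip: power_mult_distrib)
  also have "(2::real)^j * (3/2)^j = 3^j" by (simp flip: power_mult_distrib)
  also have "(-1)^j * (2 * 2^j - 1 - 3^j) / real j = lc 1 j + lc 3 j - 2 * lc 2 j"
    unfolding lc_def using j by (simp add: power_minus' field_simps)
  finally show ?thesis .
qed

lemma bigo_cmult: "f \<in> O[F](h) \<Longrightarrow> (\<lambda>x. c * f x) \<in> O[F](h)"
  by (cases "c = 0") auto

definition Dc :: "nat \<Rightarrow> real" where "Dc j = lc 1 j + lc 3 j - 2 * lc 2 j"

lemma lc0: "lc c 0 = 0" by (simp add: lc_def)

lemma sum_atMost_from1: "(\<Sum>i\<le>L. lc c i / real n ^ i) = (\<Sum>i=1..L. lc c i / real n ^ i)"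
proof -
  have "(\<Sum>i\<le>L. lc c i / real n ^ i) = (\<Sum>i=0..L. lc c i / real n ^ i)" by (simp add: atMost_atLeast0)
  also have "\<dots> = (\<Sum>i=1..L. lc c i / real n ^ i)"
  proof (rule sum.mono_neutral_right)
    show "\<forall>i\<in>{0..L} - {1..L}. lc c i / real n ^ i = 0"
    proof
      fix i assume "i \<in> {0..L} - {1..L}"
      hence "i = 0" by auto
      thus "lc c i / real n ^ i = 0" by (simp add: lc0)
    qed
  qed auto
  finally show ?thesis .
qed

lemma ln_expansion1:
  assumes "c > 0"
  shows "(\<lambda>n::nat. ln (1 + c / real n) - (\<Sum>i=1..L. lc c i / real n ^ i)) \<in> O(\<lambda>n. 1 / real n ^ Suc L)"
  using ln_expansion[OF assms, of L] by (simp add: sum_atMost_from1)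

lemma d_expansion:
  "(\<lambda>n. (FG (n + 2) - FG n) - (\<Sum>j=1..M+1. Dc j / real n ^ j)) \<in> O(\<lambda>n. 1 / real n ^ (M + 2))"
proof -
  have l1: "(\<lambda>n::nat. ln (1 + 1 / real n) - (\<Sum>i=1..M+1. lc 1 i / real n ^ i)) \<in> O(\<lambda>n. 1 / real n ^ (M + 2))"
    using ln_expansion1[of 1 "M+1"] by simp
  have l3: "(\<lambda>n::nat. ln (1 + 3 / real n) - (\<Sum>i=1..M+1. lc 3 i / real n ^ i)) \<in> O(\<lambda>n. 1 / real n ^ (M + 2))"
    using ln_expansion1[of 3 "M+1"] by simp
  have l2: "(\<lambda>n::nat. 2 * (ln (1 + 2 / real n) - (\<Sum>i=1..M+1. lc 2 i / real n ^ i))) \<in> O(\<lambda>n. 1 / real n ^ (M + 2))"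
    using ln_expansion1[of 2 "M+1"] by (intro bigo_cmult) simp
  have "(\<lambda>n::nat. (ln (1 + 1 / real n) - (\<Sum>i=1..M+1. lc 1 i / real n ^ i))
      + (ln (1 + 3 / real n) - (\<Sum>i=1..M+1. lc 3 i / real n ^ i))
      - 2 * (ln (1 + 2 / real n) - (\<Sum>i=1..M+1. lc 2 i / real n ^ i))) \<in> O(\<lambda>n. 1 / real n ^ (M + 2))"
    by (intro sum_in_bigo l1 l2 l3)
  thus ?thesis
  proof (rule bigo_ev_cong)
    show "\<forall>\<^sub>F n in sequentially. (ln (1 + 1 / real n) - (\<Sum>i=1..M+1. lc 1 i / real n ^ i))
      + (ln (1 + 3 / real n) - (\<Sum>i=1..M+1. lc 3 i / real n ^ i))
      - 2 * (ln (1 + 2 / real n) - (\<Sum>i=1..M+1. lc 2 i / real n ^ i))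
      = (FG (n + 2) - FG n) - (\<Sum>j=1..M+1. Dc j / real n ^ j)"
    proof (rule eventually_sequentiallyI[of 1])
      fix n :: nat assume n: "n \<ge> 1"
      hence np: "real n > 0" by simp
      have lnc: "ln (real n + c) = ln (real n) + ln (1 + c / real n)" if "c > 0" for c :: real
      proof -
        have "real n + c = real n * (1 + c / real n)" using np by (simp add: field_simps)
        moreover have "1 + c / real n > 0" using np that by (simp add: add_pos_pos)
        ultimately show ?thesis using np by (simp add: ln_mult)
      qed
      have "FG (n + 2) - FG n = ln (1 + 1 / real n) + ln (1 + 3 / real n) - 2 * ln (1 + 2 / real n)"
        unfolding FG_step using lnc[of 1] lnc[of 2] lnc[of 3] by simp
      moreover have "(\<Sum>j=1..M+1. Dc j / real n ^ j) = (\<Sum>i=1..M+1. lc 1 i / real n ^ i)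
          + (\<Sum>i=1..M+1. lc 3 i / real n ^ i) - 2 * (\<Sum>i=1..M+1. lc 2 i / real n ^ i)"
        by (simp add: Dc_def sum.distrib sum_subtractf sum_distrib_left diff_divide_distrib add_divide_distrib)
      ultimately show "(ln (1 + 1 / real n) - (\<Sum>i=1..M+1. lc 1 i / real n ^ i))
      + (ln (1 + 3 / real n) - (\<Sum>i=1..M+1. lc 3 i / real n ^ i))
      - 2 * (ln (1 + 2 / real n) - (\<Sum>i=1..M+1. lc 2 i / real n ^ i))
      = (FG (n + 2) - FG n) - (\<Sum>j=1..M+1. Dc j / real n ^ j)" by simp
    qed
  qed
qed

definition P :: "nat \<Rightarrow> nat \<Rightarrow> real" where
  "P M n = (\<Sum>k=1..M. lambda_coeff k / real n ^ k)"

lemma gk_diag: "gk j j = 1" by (simp add: gk_def)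
lemma gk_above: "k > j \<Longrightarrow> gk k j = 0" by (simp add: gk_def)

lemma split_sum:
  assumes j: "1 \<le> j" "j \<le> M + 1"
  shows "(\<Sum>k=1..M. lambda_coeff k * gk k j) = Dc j + (if j \<le> M then lambda_coeff j else 0)"
proof (cases "j \<le> M")
  case True
  have "(\<Sum>k=1..M. lambda_coeff k * gk k j) = (\<Sum>k=1..j. lambda_coeff k * gk k j)"
    by (rule sum.mono_neutral_right) (use True in \<open>auto simp: gk_above\<close>)
  also have "\<dots> = (\<Sum>k=1..j-1. lambda_coeff k * gk k j) + lambda_coeff j * gk j j"
  proof -
    have "{1..j} = insert j {1..j-1}" using j by auto
    thus ?thesis using j by (simp add: add.commute)
  qed
  also have "\<dots> = Dc j + lambda_coeff j" using star[OF j(1)] by (simp add: gk_diag Dc_def)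
  finally show ?thesis using True by simp
next
  case False
  hence "j = M + 1" using j by simp
  hence "(\<Sum>k=1..M. lambda_coeff k * gk k j) = (\<Sum>k=1..j-1. lambda_coeff k * gk k j)" by simp
  also have "\<dots> = Dc j" using star[OF j(1)] by (simp add: Dc_def)
  finally show ?thesis using False by simp
qed

lemma double_sum_id:
  "(\<Sum>k=1..M. lambda_coeff k * (\<Sum>j=1..M+1. gk k j / real n ^ j)) - P M n
     = (\<Sum>j=1..M+1. Dc j / real n ^ j)"
proof -
  have "(\<Sum>k=1..M. lambda_coeff k * (\<Sum>j=1..M+1. gk k j / real n ^ j))
      = (\<Sum>j=1..M+1. (\<Sum>k=1..M. lambda_coeff k * gk k j) / real n ^ j)"
  proof -
    have "(\<Sum>k=1..M. lambda_coeff k * (\<Sum>j=1..M+1. gk k j / real n ^ j))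
        = (\<Sum>k=1..M. \<Sum>j=1..M+1. lambda_coeff k * gk k j / real n ^ j)"
      by (simp only: sum_distrib_left times_divide_eq_right)
    also have "\<dots> = (\<Sum>j=1..M+1. \<Sum>k=1..M. lambda_coeff k * gk k j / real n ^ j)"
      by (rule sum.swap)
    also have "\<dots> = (\<Sum>j=1..M+1. (\<Sum>k=1..M. lambda_coeff k * gk k j) / real n ^ j)"
      by (simp only: sum_divide_distrib)
    finally show ?thesis .
  qed
  also have "\<dots> = (\<Sum>j=1..M+1. Dc j / real n ^ j + (if j \<le> M then lambda_coeff j / real n ^ j else 0))"
  proof (rule sum.cong[OF refl])
    fix j assume j: "j \<in> {1..M+1}"
    hence e: "(\<Sum>k=1..M. lambda_coeff k * gk k j) = Dc j + (if j \<le> M then lambda_coeff j else 0)"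
      by (intro split_sum) auto
    show "(\<Sum>k=1..M. lambda_coeff k * gk k j) / real n ^ j = Dc j / real n ^ j + (if j \<le> M then lambda_coeff j / real n ^ j else 0)"
      unfolding e by (cases "j \<le> M") (simp_all add: add_divide_distrib)
  qed
  also have "\<dots> = (\<Sum>j=1..M+1. Dc j / real n ^ j) + (\<Sum>j=1..M+1. (if j \<le> M then lambda_coeff j / real n ^ j else 0))"
    by (rule sum.distrib)
  also have "(\<Sum>j=1..M+1. (if j \<le> M then lambda_coeff j / real n ^ j else 0)) = P M n"
  proof -
    have "(\<Sum>j=1..M+1. (if j \<le> M then lambda_coeff j / real n ^ j else 0))
        = (\<Sum>j=1..M. (if j \<le> M then lambda_coeff j / real n ^ j else 0))"
      by (rule sum.mono_neutral_right) auto
    also have "\<dots> = P M n" unfolding P_def by (intro sum.cong refl) auto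
    finally show ?thesis .
  qed
  finally show ?thesis by simp
qed

lemma P_shift:
  "(\<lambda>n. (P M (n + 2) - P M n) - (\<Sum>j=1..M+1. Dc j / real n ^ j)) \<in> O(\<lambda>n. 1 / real n ^ (M + 2))"
proof -
  have "(\<lambda>n. \<Sum>k\<in>{1..M}. lambda_coeff k * (1 / real (n + 2) ^ k - (\<Sum>j=1..M+1. gk k j / real n ^ j)))
      \<in> O(\<lambda>n. 1 / real n ^ (M + 2))"
  proof (rule big_sum_in_bigo)
    fix k assume k: "k \<in> {1..M}"
    have "(\<lambda>n::nat. 1 / real (n + 2) ^ k - (\<Sum>j=1..M+1. gk k j / real n ^ j)) \<in> O(\<lambda>n. 1 / real n ^ Suc (M + 1))"
      using k by (intro shift_expansion) auto
    thus "(\<lambda>n. lambda_coeff k * (1 / real (n + 2) ^ k - (\<Sum>j=1..M+1. gk k j / real n ^ j))) \<in> O(\<lambda>n. 1 / real n ^ (M + 2))"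
      by (intro bigo_cmult) simp
  qed
  also have "(\<lambda>n. \<Sum>k\<in>{1..M}. lambda_coeff k * (1 / real (n + 2) ^ k - (\<Sum>j=1..M+1. gk k j / real n ^ j)))
      = (\<lambda>n. (P M (n + 2) - P M n) - (\<Sum>j=1..M+1. Dc j / real n ^ j))"
  proof
    fix n
    have "(\<Sum>k\<in>{1..M}. lambda_coeff k * (1 / real (n + 2) ^ k - (\<Sum>j=1..M+1. gk k j / real n ^ j)))
        = P M (n + 2) - (\<Sum>k=1..M. lambda_coeff k * (\<Sum>j=1..M+1. gk k j / real n ^ j))"
      by (simp add: P_def right_diff_distrib sum_subtractf)
    also have "\<dots> = (P M (n + 2) - P M n) - (\<Sum>j=1..M+1. Dc j / real n ^ j)"
      using double_sum_id[where M=M and n=n] by linarith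
    finally show "(\<Sum>k\<in>{1..M}. lambda_coeff k * (1 / real (n + 2) ^ k - (\<Sum>j=1..M+1. gk k j / real n ^ j)))
        = (P M (n + 2) - P M n) - (\<Sum>j=1..M+1. Dc j / real n ^ j)" .
  qed
  finally show ?thesis .
qed

lemma P_tendsto: "P M \<longlonglongrightarrow> 0"
proof -
  have "(\<lambda>n. \<Sum>k=1..M. lambda_coeff k * (1 / real n) ^ k) \<longlonglongrightarrow> (\<Sum>k=1..M. lambda_coeff k * 0 ^ k)"
    by (intro tendsto_intros lim_inverse_n')
  moreover have "(\<Sum>k=1..M. lambda_coeff k * (0::real) ^ k) = 0" by (intro sum.neutral) auto
  moreover have "(\<lambda>n. \<Sum>k=1..M. lambda_coeff k * (1 / real n) ^ k) = P M"
    by (simp add: P_def fun_eq_iff power_one_over divide_inverse power_inverse)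
  ultimately show ?thesis by simp
qed

lemma FG_expansion: "(\<lambda>n. FG n - P M n) \<in> O(\<lambda>n. 1 / real n ^ (M + 1))"
proof (rule telescope)
  show "(\<lambda>n. FG n - P M n) \<longlonglongrightarrow> 0" using tendsto_diff[OF FG_tendsto P_tendsto[of M]] by simp
  have "(\<lambda>n. ((FG (n + 2) - FG n) - (\<Sum>j=1..M+1. Dc j / real n ^ j))
           - ((P M (n + 2) - P M n) - (\<Sum>j=1..M+1. Dc j / real n ^ j))) \<in> O(\<lambda>n. 1 / real n ^ (M + 2))"
    by (intro sum_in_bigo d_expansion P_shift)
  thus "(\<lambda>n. (FG (n + 2) - P M (n + 2)) - (FG n - P M n)) \<in> O(\<lambda>n. 1 / real n ^ (M + 2))"
    by (simp add: algebra_simps)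
qed

lemma T_bounded: "(\<lambda>n::nat. \<Sum>j=0..N. t j / real n ^ j) \<in> O(\<lambda>_. 1)"
proof (rule big_sum_in_bigo)
  fix j
  have "(\<lambda>n::nat. 1 / real n ^ j) \<in> O(\<lambda>n. 1 / real n ^ 0)" by (rule inv_pow_bigo) simp
  hence "(\<lambda>n::nat. t j * (1 / real n ^ j)) \<in> O(\<lambda>_. 1)" by (intro bigo_cmult) simp
  thus "(\<lambda>n::nat. t j / real n ^ j) \<in> O(\<lambda>_. 1)" by simp
qed

lemma prod_expansion:
  fixes t :: "nat \<Rightarrow> real"
  assumes sys: "\<And>m. m \<ge> 1 \<Longrightarrow>
               (\<Sum>j=1..m. (-1) ^ (j + 1) * t (m - j) / real j) = lambda_coeff m"
  shows "(\<lambda>n. (\<Sum>i=1..N+1. lc 1 i / real n ^ i) * (\<Sum>j=0..N. t j / real n ^ j) - P (N+1) n)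
           \<in> O(\<lambda>n. 1 / real n ^ (N + 2))"
proof -
  define K where "K = N + 1"
  define A where "A = {1..K} \<times> {0..N}"
  define Tr where "Tr = {p \<in> A. fst p + snd p \<le> K}"
  define a where "a = (\<lambda>p n. lc 1 (fst p) * t (snd p) / real n ^ (fst p + snd p))"
  have finA: "finite A" by (simp add: A_def)
  have TrA: "Tr \<subseteq> A" by (auto simp: Tr_def)
  have prod: "(\<Sum>i=1..K. lc 1 i / real n ^ i) * (\<Sum>j=0..N. t j / real n ^ j) = (\<Sum>p\<in>A. a p n)" for n
  proof -
    have "(\<Sum>i=1..K. lc 1 i / real n ^ i) * (\<Sum>j=0..N. t j / real n ^ j)
        = (\<Sum>i=1..K. \<Sum>j=0..N. lc 1 i / real n ^ i * (t j / real n ^ j))"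
      by (rule sum_product)
    also have "\<dots> = (\<Sum>i=1..K. \<Sum>j=0..N. a (i, j) n)"
      by (intro sum.cong refl) (simp add: a_def power_add)
    also have "\<dots> = (\<Sum>p\<in>A. a p n)" unfolding A_def by (subst sum.cartesian_product) (simp add: case_prod_unfold)
    finally show ?thesis .
  qed
  have split: "(\<Sum>p\<in>A. a p n) = (\<Sum>p\<in>A - Tr. a p n) + (\<Sum>p\<in>Tr. a p n)" for n
    using sum.subset_diff[OF TrA finA] by simp
  have tri: "(\<Sum>p\<in>Tr. a p n) = P K n" for n
  proof -
    have "(\<Sum>p\<in>Tr. a p n) = (\<Sum>q\<in>Sigma {1..K} (\<lambda>m. {1..m}). lc 1 (snd q) * t (fst q - snd q) / real n ^ fst q)"
    proof (rule sum.reindex_bij_witness[where i="\<lambda>q. (snd q, fst q - snd q)" and j="\<lambda>p. (fst p + snd p, fst p)"])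
      fix p assume "p \<in> Tr"
      thus "(fst p + snd p, fst p) \<in> Sigma {1..K} (\<lambda>m. {1..m})" by (auto simp: Tr_def A_def)
      show "(snd (fst p + snd p, fst p), fst (fst p + snd p, fst p) - snd (fst p + snd p, fst p)) = p"
        by (cases p) simp
      show "lc 1 (snd (fst p + snd p, fst p)) * t (fst (fst p + snd p, fst p) - snd (fst p + snd p, fst p)) /
          real n ^ fst (fst p + snd p, fst p) = a p n"
        by (cases p) (simp add: a_def)
    next
      fix q assume q: "q \<in> Sigma {1..K} (\<lambda>m. {1..m})"
      thus "(snd q, fst q - snd q) \<in> Tr" by (auto simp: Tr_def A_def K_def)
      show "(fst (snd q, fst q - snd q) + snd (snd q, fst q - snd q), fst (snd q, fst q - snd q)) = q"
        using q by (cases q) auto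
    qed
    also have "\<dots> = (\<Sum>m=1..K. \<Sum>i=1..m. lc 1 i * t (m - i) / real n ^ m)"
      by (subst sum.Sigma) (auto simp: case_prod_unfold)
    also have "\<dots> = (\<Sum>m=1..K. lambda_coeff m / real n ^ m)"
    proof (rule sum.cong[OF refl])
      fix m assume m: "m \<in> {1..K}"
      have "(\<Sum>i=1..m. lc 1 i * t (m - i) / real n ^ m) = (\<Sum>i=1..m. (-1) ^ (i + 1) * t (m - i) / real i) / real n ^ m"
        by (simp add: sum_divide_distrib lc_def)
      also have "\<dots> = lambda_coeff m / real n ^ m" using sys[of m] m by simp
      finally show "(\<Sum>i=1..m. lc 1 i * t (m - i) / real n ^ m) = lambda_coeff m / real n ^ m" .
    qed
    also have "\<dots> = P K n" by (simp add: P_def)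
    finally show ?thesis .
  qed
  have rest: "(\<lambda>n. \<Sum>p\<in>A - Tr. a p n) \<in> O(\<lambda>n. 1 / real n ^ (N + 2))"
  proof (rule big_sum_in_bigo)
    fix p assume p: "p \<in> A - Tr"
    hence "fst p + snd p \<ge> N + 2" by (auto simp: A_def Tr_def K_def)
    hence "(\<lambda>n::nat. 1 / real n ^ (fst p + snd p)) \<in> O(\<lambda>n. 1 / real n ^ (N + 2))"
      by (rule inv_pow_bigo)
    hence "(\<lambda>n::nat. (lc 1 (fst p) * t (snd p)) * (1 / real n ^ (fst p + snd p))) \<in> O(\<lambda>n. 1 / real n ^ (N + 2))"
      by (rule bigo_cmult)
    thus "(\<lambda>n. a p n) \<in> O(\<lambda>n. 1 / real n ^ (N + 2))" by (simp add: a_def)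
  qed
  have "(\<lambda>n. (\<Sum>i=1..K. lc 1 i / real n ^ i) * (\<Sum>j=0..N. t j / real n ^ j) - P K n)
      = (\<lambda>n. \<Sum>p\<in>A - Tr. a p n)"
  proof
    fix n
    show "(\<Sum>i=1..K. lc 1 i / real n ^ i) * (\<Sum>j=0..N. t j / real n ^ j) - P K n = (\<Sum>p\<in>A - Tr. a p n)"
      using prod[of n] split[of n] tri[of n] by linarith
  qed
  with rest show ?thesis by (simp add: K_def)
qed

theorem theorem17:
  fixes t :: "nat \<Rightarrow> real"
  assumes t0: "t 0 = 1/2"
    and sys: "\<And>m. m \<ge> 1 \<Longrightarrow>
               (\<Sum>j=1..m. (-1) ^ (j + 1) * t (m - j) / real j) = lambda_coeff m"
  shows "\<forall>N::nat. (\<lambda>n::nat. ln (Omega n ^ 2 / (Omega (n - 1) * Omega (n + 1)))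
             - ln (1 + 1 / real n) * (\<Sum>j=0..N. t j / real n ^ j))
           \<in> O[sequentially](\<lambda>n::nat. 1 / real n ^ (N + 2))"
proof
  fix N :: nat
  define T where "T = (\<lambda>n::nat. \<Sum>j=0..N. t j / real n ^ j)"
  define S where "S = (\<lambda>n::nat. \<Sum>i=1..N+1. lc 1 i / real n ^ i)"
  have h1: "(\<lambda>n. FG n - P (N+1) n) \<in> O(\<lambda>n. 1 / real n ^ (N + 2))"
    using FG_expansion[of "N+1"] by simp
  have h2: "(\<lambda>n. (ln (1 + 1 / real n) - S n) * T n) \<in> O(\<lambda>n. 1 / real n ^ (N + 2) * 1)"
  proof (rule landau_o.big.mult)
    show "(\<lambda>n. ln (1 + 1 / real n) - S n) \<in> O(\<lambda>n. 1 / real n ^ (N + 2))"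
      using ln_expansion1[of 1 "N+1"] by (simp add: S_def)
    show "T \<in> O(\<lambda>_. 1)" unfolding T_def by (rule T_bounded)
  qed
  have h3: "(\<lambda>n. S n * T n - P (N+1) n) \<in> O(\<lambda>n. 1 / real n ^ (N + 2))"
    unfolding S_def T_def by (rule prod_expansion[OF sys])
  have "(\<lambda>n. (FG n - P (N+1) n) - (ln (1 + 1 / real n) - S n) * T n - (S n * T n - P (N+1) n))
      \<in> O(\<lambda>n. 1 / real n ^ (N + 2))"
    using h2 by (intro sum_in_bigo h1 h3) simp
  thus "(\<lambda>n::nat. ln (Omega n ^ 2 / (Omega (n - 1) * Omega (n + 1)))
             - ln (1 + 1 / real n) * (\<Sum>j=0..N. t j / real n ^ j))
           \<in> O[sequentially](\<lambda>n::nat. 1 / real n ^ (N + 2))"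
  proof (rule bigo_ev_cong)
    show "\<forall>\<^sub>F n in sequentially. (FG n - P (N+1) n) - (ln (1 + 1 / real n) - S n) * T n - (S n * T n - P (N+1) n)
        = ln (Omega n ^ 2 / (Omega (n - 1) * Omega (n + 1))) - ln (1 + 1 / real n) * (\<Sum>j=0..N. t j / real n ^ j)"
    proof (rule eventually_sequentiallyI[of 1])
      fix n :: nat assume n: "n \<ge> 1"
      show "(FG n - P (N+1) n) - (ln (1 + 1 / real n) - S n) * T n - (S n * T n - P (N+1) n)
        = ln (Omega n ^ 2 / (Omega (n - 1) * Omega (n + 1))) - ln (1 + 1 / real n) * (\<Sum>j=0..N. t j / real n ^ j)"
        unfolding fexpr_eq[OF n] by (simp add: algebra_simps T_def)
    qed
  qed
qed

end
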